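(* Let $A$ be a real symmetric nonsingular $n\times n$ matrix and let $L$ be a linear subspace of $\mathbb R^n$ with orthogonal complement $L^*$. Suppose $A$ is positive definite on $L$ (i.e. $\mathbf x^TA\mathbf x>0$ for all nonzero $\mathbf x\in L$) and $A^{-1}$ is positive definite on $L^*$ (i.e. $\mathbf y^TA^{-1}\mathbf y>0$ for all nonzero $\mathbf y\in L^*$). Then $A$ is positive definite. *)

theory Defs
  imports "HOL-Analysis.Analysis"
begin

definition pos_def_on :: "real^'n^'n \<Rightarrow> (real^'n) set \<Rightarrow> bool" where
  "pos_def_on A S \<longleftrightarrow> (\<forall>x\<in>S. x \<noteq> 0 \<longrightarrow> x \<bullet> (A *v x) > 0)"

definition pos_def :: "real^'n^'n \<Rightarrow> bool" where
  "pos_def A \<longleftrightarrow> pos_def_on A UNIV"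

end

theory Submission
  imports Defs
begin

lemma sym_inner:
  fixes A :: "real^'n^'n"
  assumes "transpose A = A"
  shows "x \<bullet> (A *v y) = (A *v x) \<bullet> y"
  by (metis assms dot_lmul_matrix inner_commute transpose_transpose vector_transpose_matrix)

theorem theorem3p4:
  fixes A :: "real^'n^'n" and L :: "(real^'n) set"
  assumes "transpose A = A"
    and "invertible A"
    and "subspace L"
    and "pos_def_on A L"
    and "pos_def_on (matrix_inv A) (orthogonal_comp L)"
  shows "pos_def A"
proof -
  define B where "B = matrix_inv A"
  have AB: "A ** B = mat 1" and BA: "B ** A = mat 1"
    using assms(2) unfolding invertible_def B_def matrix_inv_def
    by (metis (mono_tags, lifting) someI_ex)+
  have ABv: "A *v (B *v m) = m" for m
    by (simp add: AB matrix_vector_mul_assoc)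
  have BAv: "B *v (A *v m) = m" for m
    by (simp add: BA matrix_vector_mul_assoc)
  let ?P = "orthogonal_comp L"
  have psd1: "l \<bullet> (A *v l) \<ge> 0" if "l \<in> L" for l
    using assms(4) that unfolding pos_def_on_def by (cases "l = 0") force+
  have psd2: "m \<bullet> (B *v m) \<ge> 0" if "m \<in> ?P" for m
    using assms(5) that unfolding pos_def_on_def B_def by (cases "m = 0") force+
  have key: "(l + B *v m) \<bullet> (A *v (l + B *v m)) = l \<bullet> (A *v l) + m \<bullet> (B *v m)"
    if "l \<in> L" "m \<in> ?P" for l m
  proof -
    have lm: "l \<bullet> m = 0" using that unfolding orthogonal_comp_def orthogonal_def by auto
    have "(B *v m) \<bullet> (A *v l) = (A *v (B *v m)) \<bullet> l" using sym_inner[OF assms(1)] by blast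
    then have "(B *v m) \<bullet> (A *v l) = 0" using lm by (simp add: ABv inner_commute)
    then show ?thesis
      by (simp add: matrix_vector_right_distrib ABv inner_add_left inner_add_right lm inner_commute)
  qed
  have zero: "l = 0 \<and> m = 0" if "l \<in> L" "m \<in> ?P" "l + B *v m = 0" for l m
  proof -
    have "l \<bullet> (A *v l) + m \<bullet> (B *v m) = 0" using key[OF that(1,2)] that(3) by simp
    then have "l \<bullet> (A *v l) = 0" "m \<bullet> (B *v m) = 0" using psd1[OF that(1)] psd2[OF that(2)] by linarith+
    then show ?thesis using assms(4,5) that(1,2) unfolding pos_def_on_def B_def by force
  qed
  define T where "T = (*v) B ` ?P"
  have subP: "subspace ?P" by (rule subspace_orthogonal_comp)
  have linB: "linear ((*v) B)" by (simp add: matrix_vector_mul_linear)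
  have subT: "subspace T" unfolding T_def using subP linB by (metis linear_subspace_image)
  have injB: "inj ((*v) B)" by (metis ABv injI)
  have dimT: "dim T = dim ?P" unfolding T_def
    by (rule dim_image_eq[OF linB]) (meson injB inj_on_subset subset_UNIV)
  have LT: "L \<inter> T = {0}"
  proof -
    have "x = 0" if xL: "x \<in> L" and xT: "x \<in> T" for x
    proof -
      obtain m where m: "m \<in> ?P" "x = B *v m" using xT T_def by auto
      have "- m \<in> ?P" using subP m(1) by (simp add: subspace_neg)
      moreover have "x + B *v (- m) = 0" using m linB by (simp add: linear_neg)
      ultimately show ?thesis using zero xL by blast
    qed
    then show ?thesis using assms(3) subT by (auto simp: subspace_0)
  qed
  have LP: "L \<inter> ?P = {0}" by (rule orthogonal_Int_0[OF assms(3)])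
  have sumLP: "{x + y |x y. x \<in> L \<and> y \<in> ?P} = UNIV"
    using subspace_sum_orthogonal_comp[OF assms(3)] by (force simp: set_plus_def)
  have d1: "dim L + dim ?P = DIM(real^'n)"
    using dim_sums_Int[OF assms(3) subP] sumLP LP by (simp add: dim_UNIV)
  have d2: "dim {x + y |x y. x \<in> L \<and> y \<in> T} = dim L + dim T"
    using dim_sums_Int[OF assms(3) subT] LT by simp
  have subS: "subspace {x + y |x y. x \<in> L \<and> y \<in> T}"
    using subspace_sums[OF assms(3) subT] by (simp add: set_plus_def)
  have full: "{x + y |x y. x \<in> L \<and> y \<in> T} = UNIV"
    using dim_eq_full[of "{x + y |x y. x \<in> L \<and> y \<in> T}"] d1 d2 dimT subS
    by (simp add: span_eq_iff[symmetric])
  show ?thesis unfolding pos_def_def pos_def_on_def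
  proof (intro ballI impI)
    fix z :: "real^'n" assume "z \<noteq> 0"
    obtain l t where lt: "l \<in> L" "t \<in> T" "z = l + t" using full by blast
    obtain m where m: "m \<in> ?P" "t = B *v m" using lt(2) T_def by auto
    have nz: "l \<noteq> 0 \<or> m \<noteq> 0" using \<open>z \<noteq> 0\<close> lt m by auto
    have "z \<bullet> (A *v z) = l \<bullet> (A *v l) + m \<bullet> (B *v m)" using key[OF lt(1) m(1)] lt m by simp
    moreover have "l \<bullet> (A *v l) + m \<bullet> (B *v m) > 0"
    proof (cases "l = 0")
      case True
      then have "m \<bullet> (B *v m) > 0" using nz assms(5) m(1) unfolding pos_def_on_def B_def by auto
      then show ?thesis using psd1[OF lt(1)] by linarith
    next
      case False
      then have "l \<bullet> (A *v l) > 0" using assms(4) lt(1) unfolding pos_def_on_def by auto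
      then show ?thesis using psd2[OF m(1)] by linarith
    qed
    ultimately show "z \<bullet> (A *v z) > 0" by simp
  qed
qed

end
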